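(* Consider the structure $X^n\xrightarrow{\overline{\mathcal F}}V^n\xrightarrow{\mathcal G^n}A^n$ with loss $l\colon Y\times A\to[0,M]$, and let $\vec P=P_1\times\dots\times P_n\in\mathcal P_{l_{\mathcal G^n\circ\overline{\mathcal F}}}$ be a product probability measure on $Z^n$. Then for all $f,f'\in\mathcal F$, $$d_{[\vec P,l_{\mathcal G^n}]}(\bar f,\bar f')\le d^*_{[\bar P,l_{\mathcal G}]}(f,f'),$$ where $\bar P=\frac1n\sum_{i=1}^n P_i$.
   Context: $Z=X\times Y$; $\mathcal F$ maps $X\to V$, $\mathcal G$ maps $V\to A$; $\bar f=(f,\dots,f)$ acting componentwise on $X^n$; $\mathcal G^n$ the $n$-tuples $\vec g=(g_1,\dots,g_n)$ acting componentwise. $l_{\vec g\circ\bar f}\colon Z^n\to[0,M]$, $((x_1,y_1),\dots,(x_n,y_n))\mapsto\frac1n\sum_i l(y_i,g_i(f(x_i)))$; $l_{\mathcal G^n\circ\overline{\mathcal F}}$ the set of these; $\mathcal P_{\mathcal K}$ denotes probability measures on the $\sigma$-algebra generated by inverse images of open balls under the functions in $\mathcal K$. $l_{g\circ f}(x,y)=l(y,g(f(x)))$. $d_{[\vec P,l_{\mathcal G^n}]}(\bar f,\bar f')=\sup_{\vec g\in\mathcal G^n}\int_{Z^n}|l_{\vec g\circ\bar f}-l_{\vec g\circ\bar f'}|\,d\vec P$ and $d^*_{[P,l_{\mathcal G}]}(f,f')=\int_Z\sup_{g\in\mathcal G}|l_{g\circ f}(z)-l_{g\circ f'}(z)|\,dP(z)$.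 *)

theory Defs
  imports "HOL-Probability.Probability"
begin

definition loss_comp :: "('y \<Rightarrow> 'a \<Rightarrow> real) \<Rightarrow> ('v \<Rightarrow> 'a) \<Rightarrow> ('x \<Rightarrow> 'v) \<Rightarrow> 'x \<times> 'y \<Rightarrow> real" where
  "loss_comp l g f z = l (snd z) (g (f (fst z)))"

definition loss_vec :: "nat \<Rightarrow> ('y \<Rightarrow> 'a \<Rightarrow> real) \<Rightarrow> (nat \<Rightarrow> 'v \<Rightarrow> 'a) \<Rightarrow> ('x \<Rightarrow> 'v) \<Rightarrow> (nat \<Rightarrow> 'x \<times> 'y) \<Rightarrow> real" where
  "loss_vec n l gs f zs = (1 / real n) * (\<Sum>i<n. loss_comp l (gs i) f (zs i))"

definition prod_meas :: "nat \<Rightarrow> (nat \<Rightarrow> ('x \<times> 'y) measure) \<Rightarrow> (nat \<Rightarrow> 'x \<times> 'y) measure" where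
  "prod_meas n P = PiM {..<n} P"

text \<open>The mixture measure (1/n) sum_i P_i (all P_i on the same measurable space as P 0).\<close>
definition mixture :: "nat \<Rightarrow> (nat \<Rightarrow> 'z measure) \<Rightarrow> 'z measure" where
  "mixture n P = measure_of (space (P 0)) (sets (P 0))
      (\<lambda>A. (\<Sum>i<n. emeasure (P i) A) / ennreal (real n))"

definition d_multi :: "nat \<Rightarrow> (nat \<Rightarrow> ('x \<times> 'y) measure) \<Rightarrow> ('y \<Rightarrow> 'a \<Rightarrow> real) \<Rightarrow> ('v \<Rightarrow> 'a) set
    \<Rightarrow> ('x \<Rightarrow> 'v) \<Rightarrow> ('x \<Rightarrow> 'v) \<Rightarrow> real" where
  "d_multi n P l G f f' =
     (SUP gs \<in> PiE {..<n} (\<lambda>_. G).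
        integral\<^sup>L (prod_meas n P) (\<lambda>zs. \<bar>loss_vec n l gs f zs - loss_vec n l gs f' zs\<bar>))"

definition d_star :: "('x \<times> 'y) measure \<Rightarrow> ('y \<Rightarrow> 'a \<Rightarrow> real) \<Rightarrow> ('v \<Rightarrow> 'a) set
    \<Rightarrow> ('x \<Rightarrow> 'v) \<Rightarrow> ('x \<Rightarrow> 'v) \<Rightarrow> real" where
  "d_star P l G f f' =
     integral\<^sup>L P (\<lambda>z. (SUP g \<in> G. \<bar>loss_comp l g f z - loss_comp l g f' z\<bar>))"

end

theory Submission
  imports Defs
begin

theorem lemmaC16:
  fixes n :: nat
    and P :: "nat \<Rightarrow> ('x \<times> 'y) measure"
    and l :: "'y \<Rightarrow> 'a \<Rightarrow> real"
    and M :: real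
    and F :: "('x \<Rightarrow> 'v) set"
    and G :: "('v \<Rightarrow> 'a) set"
    and f f' :: "'x \<Rightarrow> 'v"
  assumes n_pos: "n \<ge> 1"
    and G_ne: "G \<noteq> {}"
    and loss_range: "\<And>y a. 0 \<le> l y a \<and> l y a \<le> M"
    and prob: "\<And>i. i < n \<Longrightarrow> prob_space (P i)"
    and same_sets: "\<And>i. i < n \<Longrightarrow> sets (P i) = sets (P 0)"
    and meas_loss: "\<And>i g h. i < n \<Longrightarrow> g \<in> G \<Longrightarrow> h \<in> F \<Longrightarrow>
                        loss_comp l g h \<in> borel_measurable (P i)"
    and meas_sup: "\<And>i h h'. i < n \<Longrightarrow> h \<in> F \<Longrightarrow> h' \<in> F \<Longrightarrow>
                        (\<lambda>z. SUP g \<in> G. \<bar>loss_comp l g h z - loss_comp l g h' z\<bar>) \<in> borel_measurable (P i)"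
    and f_in: "f \<in> F" and f'_in: "f' \<in> F"
  shows "d_multi n P l G f f' \<le> d_star (mixture n P) l G f f'"
proof -
  define S where "S = (\<lambda>z. SUP g \<in> G. \<bar>loss_comp l g f z - loss_comp l g f' z\<bar>)"
  have absle: "\<bar>loss_comp l g f z - loss_comp l g f' z\<bar> \<le> M" for g z
    using loss_range[of "snd z" "g (f (fst z))"] loss_range[of "snd z" "g (f' (fst z))"]
    unfolding loss_comp_def by linarith
  have bdd: "bdd_above ((\<lambda>g. \<bar>loss_comp l g f z - loss_comp l g f' z\<bar>) ` G)" for z
    by (rule bdd_aboveI[where M=M]) (clarify, rule absle)
  have S_ge: "\<bar>loss_comp l g f z - loss_comp l g f' z\<bar> \<le> S z" if "g \<in> G" for g z
    unfolding S_def using that bdd by (intro cSUP_upper) auto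
  have S_le: "S z \<le> M" for z
    unfolding S_def using G_ne absle by (intro cSUP_least) auto
  have S_nn: "0 \<le> S z" for z
    using G_ne S_ge by (meson abs_ge_zero all_not_in_conv order_trans)
  have S_meas: "S \<in> borel_measurable (P i)" if "i < n" for i
    unfolding S_def using meas_sup[OF that f_in f'_in] .
  have P0: "prob_space (P 0)" using prob n_pos by auto
  have spaceP: "space (P i) = space (P 0)" if "i < n" for i
    using same_sets[OF that] by (rule sets_eq_imp_space_eq)
  have intP: "integrable (P i) S" if "i < n" for i
  proof -
    interpret prob_space "P i" using prob that by auto
    show ?thesis using S_le S_nn S_meas[OF that]
      by (intro integrable_const_bound[where B=M]) auto
  qed
  have ne: "{..<n} \<noteq> {}"
  proof -
    have "(0::nat) \<in> {..<n}" using n_pos by simp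
    then show ?thesis by blast
  qed
  define B where "B = bind (count_space {..<n}) P"
  have Pmeas: "P \<in> measurable (count_space {..<n}) (subprob_algebra (P 0))"
    unfolding measurable_count_space_eq1 space_subprob_algebra
  proof (rule Pi_I, rule CollectI, rule conjI)
    fix i assume "i \<in> {..<n}"
    then have i: "i < n" by simp
    show "subprob_space (P i)" using prob[OF i] by (rule prob_space_imp_subprob_space)
    show "sets (P i) = sets (P 0)" using same_sets[OF i] .
  qed
  have setsB: "sets B = sets (P 0)"
    unfolding B_def using ne by (intro sets_bind_measurable[OF Pmeas]) auto
  have emB: "emeasure B A = (\<Sum>i<n. emeasure (P i) A)" if "A \<in> sets (P 0)" for A
    unfolding B_def using Pmeas ne that
    by (subst emeasure_bind) (auto simp: nn_integral_count_space_finite)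
  have mixeq: "mixture n P = scale_measure (1 / real n) B"
  proof -
    have "scale_measure (1 / real n) B = measure_of (space (P 0)) (sets (P 0)) (emeasure (scale_measure (1 / real n) B))"
    proof -
      have sp: "space (scale_measure (1 / real n) B) = space (P 0)"
        unfolding space_scale_measure using setsB by (rule sets_eq_imp_space_eq)
      have st: "sets (scale_measure (1 / real n) B) = sets (P 0)"
        unfolding sets_scale_measure by (rule setsB)
      show ?thesis using measure_of_of_measure[of "scale_measure (1 / real n) B"]
        unfolding sp st by simp
    qed
    also have "\<dots> = mixture n P"
      unfolding mixture_def
    proof (rule measure_of_eq)
      show "sets (P 0) \<subseteq> Pow (space (P 0))" by (auto dest: sets.sets_into_space)
      fix A assume "A \<in> sigma_sets (space (P 0)) (sets (P 0))"
      then have A: "A \<in> sets (P 0)" by (simp add: sets.sigma_sets_eq)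
      show "emeasure (scale_measure (1 / real n) B) A = (\<Sum>i<n. emeasure (P i) A) / ennreal (real n)"
        using n_pos by (simp add: emB[OF A] divide_ennreal_def inverse_ennreal inverse_eq_divide mult.commute)
    qed
    finally show ?thesis by simp
  qed
  have SmeasB: "S \<in> borel_measurable (P 0)" using S_meas n_pos by simp
  have smix: "sets (mixture n P) = sets (P 0)" by (simp only: mixeq sets_scale_measure setsB)
  have dstar: "d_star (mixture n P) l G f f' = (\<Sum>i<n. integral\<^sup>L (P i) S) / real n"
  proof -
    have "d_star (mixture n P) l G f f' = integral\<^sup>L (mixture n P) S"
      unfolding d_star_def S_def ..
    also have "\<dots> = enn2real (\<integral>\<^sup>+ z. ennreal (S z) \<partial>(mixture n P))"
    proof (rule integral_eq_nn_integral)
      show "S \<in> borel_measurable (mixture n P)"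
        unfolding measurable_cong_sets[OF smix refl, of borel] by (rule SmeasB)
      show "AE x in mixture n P. 0 \<le> S x" using S_nn by simp
    qed
    also have "(\<integral>\<^sup>+ z. ennreal (S z) \<partial>(mixture n P)) = ennreal (1 / real n) * (\<integral>\<^sup>+ z. ennreal (S z) \<partial>B)"
    proof -
      have "(\<lambda>z. ennreal (S z)) \<in> borel_measurable B"
        unfolding measurable_cong_sets[OF setsB refl, of borel] using SmeasB by measurable
      then show ?thesis unfolding mixeq by (rule nn_integral_scale_measure)
    qed
    also have "(\<integral>\<^sup>+ z. ennreal (S z) \<partial>B) = (\<Sum>i<n. \<integral>\<^sup>+ z. ennreal (S z) \<partial>P i)"
      unfolding B_def using SmeasB
      by (subst nn_integral_bind[OF _ Pmeas]) (auto simp: nn_integral_count_space_finite)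
    also have "\<dots> = (\<Sum>i<n. ennreal (integral\<^sup>L (P i) S))"
      using intP S_nn by (intro sum.cong refl nn_integral_eq_integral) auto
    also have "\<dots> = ennreal (\<Sum>i<n. integral\<^sup>L (P i) S)"
      using S_nn by (intro sum_ennreal) (simp add: integral_nonneg)
    also have "ennreal (1 / real n) * \<dots> = ennreal ((\<Sum>i<n. integral\<^sup>L (P i) S) / real n)"
      using S_nn by (simp add: ennreal_mult[symmetric] integral_nonneg sum_nonneg)
    also have "enn2real \<dots> = (\<Sum>i<n. integral\<^sup>L (P i) S) / real n"
      using S_nn by (simp add: integral_nonneg sum_nonneg)
    finally show ?thesis .
  qed
  let ?Pi = "prod_meas n P"
  have piprob: "prob_space ?Pi" unfolding prod_meas_def using prob by (intro prob_space_PiM) auto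
  interpret pi: prob_space ?Pi by (rule piprob)
  have comp_meas: "(\<lambda>zs. h (zs i)) \<in> borel_measurable ?Pi" if "i < n" "h \<in> borel_measurable (P i)" for h i
    unfolding prod_meas_def
    by (rule measurable_compose[OF measurable_component_singleton[of i "{..<n}" P] that(2)]) (use that in simp)
  have compS_int: "integrable ?Pi (\<lambda>zs. S (zs i))" if "i < n" for i
    using S_le S_nn comp_meas[OF that S_meas[OF that]]
    by (intro pi.integrable_const_bound[where B=M]) auto
  have compS_eq: "integral\<^sup>L ?Pi (\<lambda>zs. S (zs i)) = integral\<^sup>L (P i) S" if "i < n" for i
  proof -
    have "integral\<^sup>L (P i) S = integral\<^sup>L (distr (PiM {..<n} P) (P i) (\<lambda>zs. zs i)) S"
      using prob that by (subst distr_PiM_component) auto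
    also have "\<dots> = integral\<^sup>L (PiM {..<n} P) (\<lambda>zs. S (zs i))"
      using that by (intro integral_distr measurable_component_singleton S_meas) auto
    finally show ?thesis unfolding prod_meas_def by simp
  qed
  have Gne: "PiE {..<n} (\<lambda>_. G) \<noteq> {}" using G_ne by (simp add: PiE_eq_empty_iff)
  show ?thesis
    unfolding d_multi_def
  proof (rule cSUP_least[OF Gne])
    fix gs assume gs: "gs \<in> PiE {..<n} (\<lambda>_. G)"
    then have gsi: "gs i \<in> G" if "i < n" for i using that by auto
    have lv_meas: "(\<lambda>zs. loss_vec n l gs h zs) \<in> borel_measurable ?Pi" if "h \<in> F" for h
      unfolding loss_vec_def
      using comp_meas[OF _ meas_loss[OF _ gsi that]] by measurable
    have lv_bd: "\<bar>loss_vec n l gs h zs\<bar> \<le> M" for h zs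
    proof -
      have "\<bar>loss_vec n l gs h zs\<bar> = (1 / real n) * (\<Sum>i<n. loss_comp l (gs i) h (zs i))"
        unfolding loss_vec_def using loss_range
        by (simp add: loss_comp_def sum_nonneg)
      also have "\<dots> \<le> (1 / real n) * (\<Sum>i<n. M)"
        using loss_range by (intro mult_left_mono sum_mono) (auto simp: loss_comp_def)
      also have "\<dots> = M" using n_pos by simp
      finally show ?thesis .
    qed
    have int1: "integrable ?Pi (\<lambda>zs. \<bar>loss_vec n l gs f zs - loss_vec n l gs f' zs\<bar>)"
    proof (rule pi.integrable_const_bound[where B="2*M"])
      show "AE x in ?Pi. norm \<bar>loss_vec n l gs f x - loss_vec n l gs f' x\<bar> \<le> 2 * M"
        using lv_bd[of f] lv_bd[of f'] by (intro AE_I2) (smt (verit) real_norm_def)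
      show "(\<lambda>zs. \<bar>loss_vec n l gs f zs - loss_vec n l gs f' zs\<bar>) \<in> borel_measurable ?Pi"
        using lv_meas[OF f_in] lv_meas[OF f'_in] by measurable
    qed
    have int2: "integrable ?Pi (\<lambda>zs. (1 / real n) * (\<Sum>i<n. S (zs i)))"
      using compS_int by (intro integrable_mult_right integrable_sum) auto
    have pt: "\<bar>loss_vec n l gs f zs - loss_vec n l gs f' zs\<bar> \<le> (1 / real n) * (\<Sum>i<n. S (zs i))" for zs
    proof -
      have "\<bar>loss_vec n l gs f zs - loss_vec n l gs f' zs\<bar>
          = (1 / real n) * \<bar>\<Sum>i<n. loss_comp l (gs i) f (zs i) - loss_comp l (gs i) f' (zs i)\<bar>"
        unfolding loss_vec_def by (simp add: sum_subtractf abs_mult flip: right_diff_distrib diff_divide_distrib)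
      also have "\<dots> \<le> (1 / real n) * (\<Sum>i<n. \<bar>loss_comp l (gs i) f (zs i) - loss_comp l (gs i) f' (zs i)\<bar>)"
        by (intro mult_left_mono sum_abs) auto
      also have "\<dots> \<le> (1 / real n) * (\<Sum>i<n. S (zs i))"
        using S_ge gsi by (intro mult_left_mono sum_mono) auto
      finally show ?thesis .
    qed
    have "integral\<^sup>L ?Pi (\<lambda>zs. \<bar>loss_vec n l gs f zs - loss_vec n l gs f' zs\<bar>)
        \<le> integral\<^sup>L ?Pi (\<lambda>zs. (1 / real n) * (\<Sum>i<n. S (zs i)))"
      using int1 int2 pt by (intro integral_mono) auto
    also have "\<dots> = (1 / real n) * (\<Sum>i<n. integral\<^sup>L ?Pi (\<lambda>zs. S (zs i)))"
      using compS_int by (simp add: integral_sum)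
    also have "\<dots> = d_star (mixture n P) l G f f'"
      unfolding dstar using compS_eq by simp
    finally show "integral\<^sup>L ?Pi (\<lambda>zs. \<bar>loss_vec n l gs f zs - loss_vec n l gs f' zs\<bar>)
        \<le> d_star (mixture n P) l G f f'" .
  qed
qed

end
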